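(* Consider two linear classifiers $h_1(x)=\mathbf 1(w_1^\top x\ge0)$ and $h_2(x)=\mathbf 1(w_2^\top x\ge0)$ on $\mathbb R^2$ with $\|w_i\|_2=1$, and an agent $x^{(0)}\in\mathbb R^2$ with $h_1(x^{(0)})=0$ and $h_2(P_{w_1}(x^{(0)}))=0$. Let $0<\theta<\pi$ satisfy $\cos\theta=-w_1^\top w_2$. Then, for sequential manipulation with Euclidean cost: 1. If $|\tan\theta|>\|P_{w_1}(x^{(0)})\|_2/d_{w_1}(x^{(0)})$, the best response is $x^{(2)}=x^{(1)}=\vec 0$, and $c^*_{\mathrm{seq}}(x^{(0)},\{h_1,h_2\})=\|x^{(0)}\|_2$. 2. If $|\tan\theta|\le\|P_{w_1}(x^{(0)})\|_2/d_{w_1}(x^{(0)})$, the best response is $$x^{(1)}=\Big(1-\frac{d_{w_1}(x^{(0)})}{\|P_{w_1}(x^{(0)})\|_2}|\tan\theta|\Big)P_{w_1}(x^{(0)}),\qquad x^{(2)}=P_{w_2}(x^{(1)}),$$ and $c^*_{\mathrm{seq}}(x^{(0)},\{h_1,h_2\})=d_{w_1}(x^{(0)})|\cos\theta|+\|P_{w_1}(x^{(0)})\|_2\sin\theta$.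
   Context: For a unit vector $w\in\mathbb R^2$: $P_w(x)=x$ if $w^\top x\ge0$ and $P_w(x)=x-(w^\top x)w$ otherwise (projection onto $\{y:w^\top y\ge0\}$); $d_w(x)=0$ if $w^\top x\ge0$ and $d_w(x)=|w^\top x|$ otherwise. The sequential manipulation cost is $c^*_{\mathrm{seq}}(x^{(0)},\{h_1,h_2\})=\min\{\|x^{(1)}-x^{(0)}\|_2+\|x^{(2)}-x^{(1)}\|_2:h_1(x^{(1)})=1,h_2(x^{(2)})=1\}$, and the best response is a minimizing pair $(x^{(1)},x^{(2)})$. *)

theory Defs
  imports "HOL-Analysis.Analysis"
begin

definition lin_clf :: "real^2 \<Rightarrow> real^2 \<Rightarrow> nat" where
  "lin_clf w x = (if w \<bullet> x \<ge> 0 then 1 else 0)"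

text \<open>Projection onto the half-plane {y. w^T y >= 0} (w a unit vector).\<close>
definition proj_hs :: "real^2 \<Rightarrow> real^2 \<Rightarrow> real^2" where
  "proj_hs w x = (if w \<bullet> x \<ge> 0 then x else x - (w \<bullet> x) *\<^sub>R w)"

definition dist_hs :: "real^2 \<Rightarrow> real^2 \<Rightarrow> real" where
  "dist_hs w x = (if w \<bullet> x \<ge> 0 then 0 else \<bar>w \<bullet> x\<bar>)"

definition seq_cost :: "real^2 \<Rightarrow> real^2 \<Rightarrow> real^2 \<Rightarrow> real" where
  "seq_cost x0 x1 x2 = norm (x1 - x0) + norm (x2 - x1)"

definition c_seq :: "real^2 \<Rightarrow> (real^2 \<Rightarrow> nat) \<Rightarrow> (real^2 \<Rightarrow> nat) \<Rightarrow> real" where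
  "c_seq x0 h1 h2 = Inf {seq_cost x0 x1 x2 | x1 x2. h1 x1 = 1 \<and> h2 x2 = 1}"

definition best_response ::
  "real^2 \<Rightarrow> (real^2 \<Rightarrow> nat) \<Rightarrow> (real^2 \<Rightarrow> nat) \<Rightarrow> real^2 \<Rightarrow> real^2 \<Rightarrow> bool" where
  "best_response x0 h1 h2 x1 x2 \<longleftrightarrow>
     h1 x1 = 1 \<and> h2 x2 = 1 \<and>
     (\<forall>y1 y2. h1 y1 = 1 \<longrightarrow> h2 y2 = 1 \<longrightarrow> seq_cost x0 x1 x2 \<le> seq_cost x0 y1 y2)"

end

theory Submission
  imports Defs
begin

definition rot :: "real^2 \<Rightarrow> real^2" where
  "rot w = (\<chi> i. if i = 1 then - (w$2) else w$1)"

lemma rot_c [simp]: "rot w $ 1 = - (w$2)" "rot w $ 2 = w$1"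
  by (simp_all add: rot_def)

lemma basis2:
  fixes w y :: "real^2" assumes "norm w = 1"
  shows "y = (y \<bullet> w) *\<^sub>R w + (y \<bullet> rot w) *\<^sub>R rot w"
    and "rot w \<bullet> rot w = 1" and "w \<bullet> rot w = 0" and "rot w \<bullet> w = 0" and "w \<bullet> w = 1"
proof -
  have ww: "w \<bullet> w = 1" using assms by (metis norm_eq_1)
  hence h: "w$1 * w$1 + w$2 * w$2 = 1" by (simp add: inner_vec_def sum_2)
  have i1: "y \<bullet> w = y$1*w$1 + y$2*w$2" "y \<bullet> rot w = y$1*(-(w$2)) + y$2*w$1"
    by (simp_all add: inner_vec_def sum_2)
  have c1: "(y \<bullet> w) * w$1 + (y \<bullet> rot w) * (rot w $ 1) = y$1"
  proof -
    have "(y$1*w$1 + y$2*w$2)*w$1 + (y$1*(-(w$2)) + y$2*w$1)*(-(w$2)) = y$1*(w$1 * w$1 + w$2 * w$2)"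
      by (simp add: algebra_simps)
    thus ?thesis using h i1 by simp
  qed
  have c2: "(y \<bullet> w) * w$2 + (y \<bullet> rot w) * (rot w $ 2) = y$2"
  proof -
    have "(y$1*w$1 + y$2*w$2)*w$2 + (y$1*(-(w$2)) + y$2*w$1)*(w$1) = y$2*(w$1 * w$1 + w$2 * w$2)"
      by (simp add: algebra_simps)
    thus ?thesis using h i1 by simp
  qed
  show "y = (y \<bullet> w) *\<^sub>R w + (y \<bullet> rot w) *\<^sub>R rot w"
    unfolding vec_eq_iff forall_2 using c1 c2
    by (simp only: vector_add_component vector_scaleR_component real_scaleR_def)
  show "rot w \<bullet> rot w = 1" using h by (simp add: inner_vec_def sum_2)
  show "w \<bullet> rot w = 0" by (simp add: inner_vec_def sum_2)
  show "rot w \<bullet> w = 0" by (simp add: inner_vec_def sum_2)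
  show "w \<bullet> w = 1" by fact
qed

lemma inner_basis:
  fixes w j :: "real^2" assumes "w \<bullet> w = 1" "j \<bullet> j = 1" "w \<bullet> j = 0"
  shows "(a *\<^sub>R w + b *\<^sub>R j) \<bullet> (c *\<^sub>R w + e *\<^sub>R j) = a*c + b*e"
proof -
  have "j \<bullet> w = 0" using assms(3) by (simp add: inner_commute)
  thus ?thesis using assms by (simp add: inner_add_left inner_add_right algebra_simps)
qed

lemma cert:
  fixes u w1 w2 x0 y1 y2 :: "real^2"
  assumes "norm u \<le> 1" "u = l *\<^sub>R w1 + m *\<^sub>R w2" "l \<ge> 0" "m \<ge> 0" "m \<le> 1" "norm w2 = 1"
    "lin_clf w1 y1 = 1" "lin_clf w2 y2 = 1"
  shows "- (u \<bullet> x0) \<le> seq_cost x0 y1 y2"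
proof -
  have a1: "w1 \<bullet> y1 \<ge> 0" using assms(7) unfolding lin_clf_def by (cases "w1 \<bullet> y1 \<ge> 0") simp_all
  have a2: "w2 \<bullet> y2 \<ge> 0" using assms(8) unfolding lin_clf_def by (cases "w2 \<bullet> y2 \<ge> 0") simp_all
  have "u \<bullet> (y1 - x0) \<le> norm u * norm (y1 - x0)" by (rule norm_cauchy_schwarz)
  also have "\<dots> \<le> norm (y1 - x0)" using assms(1) by (simp add: mult_left_le_one_le)
  finally have b1: "u \<bullet> (y1 - x0) \<le> norm (y1 - x0)" .
  have "(m *\<^sub>R w2) \<bullet> (y2 - y1) \<le> norm (m *\<^sub>R w2) * norm (y2 - y1)" by (rule norm_cauchy_schwarz)
  also have "\<dots> \<le> norm (y2 - y1)" using assms(4,5,6) by (simp add: mult_left_le_one_le)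
  finally have b2: "(m *\<^sub>R w2) \<bullet> (y2 - y1) \<le> norm (y2 - y1)" .
  have uy: "u \<bullet> y1 = l * (w1 \<bullet> y1) + m * (w2 \<bullet> y1)"
    unfolding assms(2) by (simp only: inner_add_left inner_scaleR_left)
  have e1: "u \<bullet> (y1 - x0) = u \<bullet> y1 - u \<bullet> x0" by (rule inner_diff_right)
  have e2: "(m *\<^sub>R w2) \<bullet> (y2 - y1) = m * (w2 \<bullet> y2) - m * (w2 \<bullet> y1)"
    by (simp only: inner_diff_right inner_scaleR_left)
  have p1: "0 \<le> l * (w1 \<bullet> y1)" using a1 assms(3) by simp
  have p2: "0 \<le> m * (w2 \<bullet> y2)" using a2 assms(4) by simp
  show ?thesis using b1 b2 e1 e2 uy p1 p2 unfolding seq_cost_def by linarith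
qed

lemma proj_ok:
  fixes w x :: "real^2" assumes "norm w = 1"
  shows "lin_clf w (proj_hs w x) = 1"
proof -
  have "w \<bullet> w = 1" using assms by (metis norm_eq_1)
  thus ?thesis by (simp add: lin_clf_def proj_hs_def inner_diff_right)
qed


lemma proj_dist:
  fixes w x :: "real^2" assumes "norm w = 1" "w \<bullet> x \<le> 0"
  shows "norm (proj_hs w x - x) = - (w \<bullet> x)"
proof (cases "w \<bullet> x = 0")
  case True thus ?thesis by (simp add: proj_hs_def)
next
  case False
  hence "w \<bullet> x < 0" using assms(2) by simp
  hence "proj_hs w x - x = (- (w \<bullet> x)) *\<^sub>R w" by (simp add: proj_hs_def)
  hence "norm (proj_hs w x - x) = \<bar>w \<bullet> x\<bar> * norm w" by simp
  thus ?thesis using assms \<open>w \<bullet> x < 0\<close> by simp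
qed

lemma cinf_min:
  fixes x0 x1 x2 :: "real^2"
  assumes "best_response x0 h1 h2 x1 x2"
  shows "c_seq x0 h1 h2 = seq_cost x0 x1 x2"
proof -
  have A: "h1 x1 = 1" "h2 x2 = 1"
    and B: "\<And>y1 y2. h1 y1 = 1 \<Longrightarrow> h2 y2 = 1 \<Longrightarrow> seq_cost x0 x1 x2 \<le> seq_cost x0 y1 y2"
    using assms unfolding best_response_def by auto
  show ?thesis unfolding c_seq_def
  proof (rule cInf_eq_minimum)
    show "seq_cost x0 x1 x2 \<in> {seq_cost x0 x1 x2 |x1 x2. h1 x1 = 1 \<and> h2 x2 = 1}" using A by blast
  next
    fix z assume "z \<in> {seq_cost x0 x1 x2 |x1 x2. h1 x1 = 1 \<and> h2 x2 = 1}"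
    then obtain y1 y2 where "z = seq_cost x0 y1 y2" "h1 y1 = 1" "h2 y2 = 1" by blast
    thus "seq_cost x0 x1 x2 \<le> z" using B by simp
  qed
qed


lemma coord_eq:
  fixes w j v v' :: "real^2"
  assumes "\<And>y. y = (y \<bullet> w) *\<^sub>R w + (y \<bullet> j) *\<^sub>R j"
    and "v \<bullet> w = v' \<bullet> w" "v \<bullet> j = v' \<bullet> j"
  shows "v = v'"
  by (metis assms)

lemma coord_norm:
  fixes w j v :: "real^2"
  assumes "\<And>y. y = (y \<bullet> w) *\<^sub>R w + (y \<bullet> j) *\<^sub>R j" "w \<bullet> w = 1" "j \<bullet> j = 1" "w \<bullet> j = 0"
  shows "norm v = sqrt ((v \<bullet> w)^2 + (v \<bullet> j)^2)"
proof -
  have e: "v = (v \<bullet> w) *\<^sub>R w + (v \<bullet> j) *\<^sub>R j" by (rule assms(1))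
  have "v \<bullet> v = (v \<bullet> w) * (v \<bullet> w) + (v \<bullet> j) * (v \<bullet> j)"
  proof -
    have "((v \<bullet> w) *\<^sub>R w + (v \<bullet> j) *\<^sub>R j) \<bullet> ((v \<bullet> w) *\<^sub>R w + (v \<bullet> j) *\<^sub>R j)
       = (v \<bullet> w) * (v \<bullet> w) + (v \<bullet> j) * (v \<bullet> j)"
      by (rule inner_basis[OF assms(2-4)])
    thus ?thesis using e by simp
  qed
  thus ?thesis by (simp add: norm_eq_sqrt_inner power2_eq_square)
qed

theorem mainTheorem13:
  fixes w1 w2 x0 :: "real^2" and \<theta> :: real
  assumes w1: "norm w1 = 1" and w2: "norm w2 = 1"
    and h1x0: "lin_clf w1 x0 = 0"
    and h2P: "lin_clf w2 (proj_hs w1 x0) = 0"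
    and th: "0 < \<theta>" "\<theta> < pi" and cth: "cos \<theta> = - (w1 \<bullet> w2)"
  shows
    "((cos \<theta> = 0 \<or> \<bar>tan \<theta>\<bar> > norm (proj_hs w1 x0) / dist_hs w1 x0) \<longrightarrow>
       best_response x0 (lin_clf w1) (lin_clf w2) 0 0 \<and>
       c_seq x0 (lin_clf w1) (lin_clf w2) = norm x0) \<and>
    ((cos \<theta> \<noteq> 0 \<and> \<bar>tan \<theta>\<bar> \<le> norm (proj_hs w1 x0) / dist_hs w1 x0) \<longrightarrow>
       (let x1 = (1 - dist_hs w1 x0 / norm (proj_hs w1 x0) * \<bar>tan \<theta>\<bar>) *\<^sub>R proj_hs w1 x0
        in best_response x0 (lin_clf w1) (lin_clf w2) x1 (proj_hs w2 x1)) \<and>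
       c_seq x0 (lin_clf w1) (lin_clf w2) =
         dist_hs w1 x0 * \<bar>cos \<theta>\<bar> + norm (proj_hs w1 x0) * sin \<theta>)"
proof -
  define J where "J = rot w1"
  have Bdec: "\<And>y. y = (y \<bullet> w1) *\<^sub>R w1 + (y \<bullet> J) *\<^sub>R J"
    unfolding J_def by (rule basis2(1)[OF w1])
  have JJ: "J \<bullet> J = 1" and w1J: "w1 \<bullet> J = 0" and Jw1: "J \<bullet> w1 = 0" and w1w1: "w1 \<bullet> w1 = 1"
    unfolding J_def using basis2[OF w1] by auto
  have CE: "\<And>v v'. v \<bullet> w1 = v' \<bullet> w1 \<Longrightarrow> v \<bullet> J = v' \<bullet> J \<Longrightarrow> v = v'"
    by (rule coord_eq[OF Bdec])
  have CN: "\<And>v. norm v = sqrt ((v \<bullet> w1)^2 + (v \<bullet> J)^2)"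
    by (rule coord_norm[OF Bdec w1w1 JJ w1J])
  have normJ: "norm J = 1" using JJ by (simp add: norm_eq_sqrt_inner)
  have wx0: "w1 \<bullet> x0 < 0"
    using h1x0 unfolding lin_clf_def by (cases "w1 \<bullet> x0 \<ge> 0") simp_all
  define d where "d = - (w1 \<bullet> x0)"
  have dpos: "d > 0" using wx0 d_def by simp
  define q where "q = x0 \<bullet> J"
  define c where "c = cos \<theta>"
  define s where "s = sin \<theta>"
  define r where "r = w2 \<bullet> J"
  have x0w1: "x0 \<bullet> w1 = - d" using d_def by (simp add: inner_commute)
  have x0J: "x0 \<bullet> J = q" using q_def by simp
  have w2w1: "w2 \<bullet> w1 = - c" using cth c_def by (simp add: inner_commute)
  have w2J: "w2 \<bullet> J = r" using r_def by simp
  have Pe: "proj_hs w1 x0 = q *\<^sub>R J"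
  proof (rule CE)
    have "proj_hs w1 x0 = x0 - (w1 \<bullet> x0) *\<^sub>R w1" using wx0 unfolding proj_hs_def by simp
    thus "proj_hs w1 x0 \<bullet> w1 = (q *\<^sub>R J) \<bullet> w1" "proj_hs w1 x0 \<bullet> J = (q *\<^sub>R J) \<bullet> J"
      using x0w1 x0J JJ Jw1 w1w1 w1J d_def by (simp_all add: inner_diff_left)
  qed
  have distd: "dist_hs w1 x0 = d" unfolding dist_hs_def using wx0 d_def by simp
  have nP: "norm (proj_hs w1 x0) = \<bar>q\<bar>" using Pe normJ by simp
  have w2P: "w2 \<bullet> proj_hs w1 x0 < 0"
    using h2P unfolding lin_clf_def by (cases "w2 \<bullet> proj_hs w1 x0 \<ge> 0") simp_all
  have qr: "q * r < 0" using w2P Pe r_def by (simp add: mult.commute)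
  have w2w2: "w2 \<bullet> w2 = 1" using w2 by (metis norm_eq_1)
  have cr: "c^2 + r^2 = 1"
  proof -
    have "norm w2 = sqrt ((- c)^2 + r^2)" using CN[of w2] w2w1 w2J by (simp add: inner_commute)
    hence "sqrt (c^2 + r^2) = 1" using w2 by simp
    thus ?thesis by simp
  qed
  have spos: "s > 0" unfolding s_def using sin_gt_zero th by simp
  have sc: "s^2 + c^2 = 1" unfolding s_def c_def by simp
  have rs: "\<bar>r\<bar> = s"
  proof -
    have "r^2 = s^2" using sc cr by simp
    hence "sqrt (r^2) = sqrt (s^2)" by simp
    thus ?thesis using spos by simp
  qed
  define a where "a = \<bar>q\<bar>"
  have as: "a * s = - (q * r)"
  proof -
    have "a * s = \<bar>q * r\<bar>" using a_def rs by (simp add: abs_mult)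
    thus ?thesis using qr by simp
  qed
  have apos: "a > 0" using qr a_def by (cases "q = 0") auto
  have ar: "a * r = - (q * s)"
  proof -
    have rr: "r * r = s * s" using sc cr by (simp add: power2_eq_square)
    have "(a * r + q * s) * s = r * (a * s + q * r) + q * (s * s - r * r)"
      by (simp add: algebra_simps)
    also have "\<dots> = 0" using as rr by simp
    finally have "(a * r + q * s) * s = 0" .
    hence "a * r + q * s = 0" using spos by simp
    thus ?thesis by simp
  qed
  have qq: "q * q = a * a" using a_def by simp
  have tanE: "\<bar>tan \<theta>\<bar> = s / \<bar>c\<bar>"
    unfolding tan_def s_def c_def using spos s_def by (simp add: abs_divide)
  define L where "L = norm x0"
  have LE: "L = sqrt (d^2 + q^2)" using CN[of x0] x0w1 x0J L_def by simp
  have "0 < d^2 + q^2" using dpos by (intro add_pos_nonneg) auto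
  hence Lpos: "L > 0" using LE by simp
  have LL: "L^2 = d^2 + a^2" using LE a_def by simp
  have x0x0: "x0 \<bullet> x0 = L^2" using L_def by (simp add: power2_norm_eq_inner)

  have part1: "best_response x0 (lin_clf w1) (lin_clf w2) 0 0 \<and>
       c_seq x0 (lin_clf w1) (lin_clf w2) = norm x0"
    if C1: "c = 0 \<or> s / \<bar>c\<bar> > a / d"
  proof -
    have key: "a * \<bar>c\<bar> \<le> s * d"
    proof (cases "c = 0")
      case True thus ?thesis using spos dpos by simp
    next
      case False
      hence "a / d < s / \<bar>c\<bar>" using C1 by simp
      hence "a * \<bar>c\<bar> < s * d" using dpos False by (simp add: field_simps)
      thus ?thesis by simp
    qed
    have F1: "0 \<le> d * s + a * c"
    proof -
      have "a * (- \<bar>c\<bar>) \<le> a * c" using apos by (intro mult_left_mono) auto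
      hence "- (a * \<bar>c\<bar>) \<le> a * c" by simp
      moreover have "s * d = d * s" by simp
      ultimately show ?thesis using key by linarith
    qed
    have F2: "a \<le> s * L"
    proof -
      have "(a * \<bar>c\<bar>)^2 \<le> (s * d)^2" using key apos by (intro power_mono) auto
      hence k2: "a^2 * c^2 \<le> s^2 * d^2" by (simp add: power_mult_distrib)
      have "a^2 = a^2 * (s^2 + c^2)" using sc by simp
      also have "\<dots> = a^2 * s^2 + a^2 * c^2" by (simp add: algebra_simps)
      also have "\<dots> \<le> a^2 * s^2 + s^2 * d^2" using k2 by simp
      also have "\<dots> = s^2 * (d^2 + a^2)" by (simp add: algebra_simps)
      also have "\<dots> = (s * L)^2" unfolding power_mult_distrib LL by (rule refl)
      finally have "a^2 \<le> (s * L)^2" .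
      moreover have "0 \<le> s * L" using spos Lpos by simp
      ultimately show ?thesis by (rule power2_le_imp_le)
    qed
    define u where "u = (- 1 / L) *\<^sub>R x0"
    define l where "l = (d * s + a * c) / (s * L)"
    define m where "m = a / (s * L)"
    have l0: "l \<ge> 0" unfolding l_def using F1 spos Lpos by simp
    have m0: "m \<ge> 0" unfolding m_def using apos spos Lpos by simp
    have m1: "m \<le> 1" unfolding m_def using F2 spos Lpos by simp
    have nu: "norm u = 1" unfolding u_def using Lpos L_def by simp
    have ue: "u = l *\<^sub>R w1 + m *\<^sub>R w2"
    proof (rule CE)
      show "u \<bullet> w1 = (l *\<^sub>R w1 + m *\<^sub>R w2) \<bullet> w1"
        unfolding u_def l_def m_def using x0w1 w1w1 w2w1 spos Lpos
        by (simp add: inner_add_left field_simps)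
      have "u \<bullet> J = - q / L" unfolding u_def using x0J by simp
      also have "\<dots> = m * r" unfolding m_def using ar spos Lpos by (simp add: field_simps)
      also have "\<dots> = (l *\<^sub>R w1 + m *\<^sub>R w2) \<bullet> J" using Jw1 w1J w2J by (simp add: inner_add_left)
      finally show "u \<bullet> J = (l *\<^sub>R w1 + m *\<^sub>R w2) \<bullet> J" .
    qed
    have ux0: "- (u \<bullet> x0) = norm x0"
      unfolding u_def using x0x0 Lpos L_def by (simp add: power2_eq_square)
    have BR: "best_response x0 (lin_clf w1) (lin_clf w2) 0 0"
      unfolding best_response_def
    proof (intro conjI allI impI)
      show "lin_clf w1 0 = 1" "lin_clf w2 0 = 1" by (simp_all add: lin_clf_def)
      fix y1 y2 assume "lin_clf w1 y1 = 1" "lin_clf w2 y2 = 1"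
      hence "- (u \<bullet> x0) \<le> seq_cost x0 y1 y2"
        using cert[OF _ ue l0 m0 m1 w2] nu by simp
      thus "seq_cost x0 0 0 \<le> seq_cost x0 y1 y2" using ux0 by (simp add: seq_cost_def)
    qed
    moreover have "c_seq x0 (lin_clf w1) (lin_clf w2) = norm x0"
      using cinf_min[OF BR] by (simp add: seq_cost_def)
    ultimately show ?thesis by simp
  qed

  have part2: "(let x1 = (1 - d / a * (s / \<bar>c\<bar>)) *\<^sub>R (q *\<^sub>R J)
        in best_response x0 (lin_clf w1) (lin_clf w2) x1 (proj_hs w2 x1)) \<and>
       c_seq x0 (lin_clf w1) (lin_clf w2) = d * \<bar>c\<bar> + a * s"
    if C2: "c \<noteq> 0" "s / \<bar>c\<bar> \<le> a / d"
  proof -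
    have cpos: "\<bar>c\<bar> > 0" using C2 by simp
    have key: "s * d \<le> a * \<bar>c\<bar>" using C2 dpos cpos by (simp add: field_simps)
    define t where "t = d / a * (s / \<bar>c\<bar>)"
    define k where "k = 1 - t"
    define x1 where "x1 = k *\<^sub>R (q *\<^sub>R J)"
    define x2 where "x2 = proj_hs w2 x1"
    have t1: "t \<le> 1" unfolding t_def using key apos cpos by (simp add: field_simps)
    have k0: "k \<ge> 0" using t1 k_def by simp
    have ta: "t * a = d * s / \<bar>c\<bar>" unfolding t_def using apos by simp
    have x1w1: "w1 \<bullet> x1 = 0" unfolding x1_def using w1J by simp
    have h1x1: "lin_clf w1 x1 = 1" using x1w1 by (simp add: lin_clf_def)
    have h2x2: "lin_clf w2 x2 = 1" unfolding x2_def by (rule proj_ok[OF w2])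
    have w2x1: "w2 \<bullet> x1 = - (k * a * s)"
    proof -
      have "w2 \<bullet> x1 = k * (q * r)" unfolding x1_def using w2J by simp
      also have "\<dots> = k * (- (a * s))" using as by simp
      finally show ?thesis by simp
    qed
    have n2: "norm (x2 - x1) = k * a * s"
      unfolding x2_def using proj_dist[OF w2, of x1] w2x1 k0 apos spos by simp
    have n1: "norm (x1 - x0) = d / \<bar>c\<bar>"
    proof -
      have "norm (x1 - x0) = sqrt (d^2 + (k * q - q)^2)"
        using CN[of "x1 - x0"] x0w1 x0J unfolding x1_def using JJ Jw1
        by (simp add: inner_diff_left)
      also have "(k * q - q)^2 = (t * a)^2" unfolding k_def using qq
        by (simp add: power2_eq_square algebra_simps)
      also have "d^2 + (t * a)^2 = (d / \<bar>c\<bar>)^2"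
      proof -
        have c2: "c^2 \<noteq> 0" using cpos by simp
        have "(t * a)^2 = (d * s)^2 / c^2" using ta by (simp add: power_divide)
        hence "d^2 + (t * a)^2 = d^2 + (d * s)^2 / c^2" by simp
        also have "\<dots> = (d^2 * c^2 + (d * s)^2) / c^2" using c2 by (simp add: add_divide_eq_iff)
        also have "\<dots> = (d^2 * c^2 + d^2 * s^2) / c^2" by (simp add: power_mult_distrib)
        finally have "d^2 + (t * a)^2 = (d^2 * c^2 + d^2 * s^2) / c^2" .
        also have "d^2 * c^2 + d^2 * s^2 = d^2 * (s^2 + c^2)" by (simp add: algebra_simps)
        also have "s^2 + c^2 = 1" by (rule sc)
        finally show ?thesis by (simp add: power_divide)
      qed
      finally show ?thesis using dpos cpos by simp
    qed
    have cost: "seq_cost x0 x1 x2 = d * \<bar>c\<bar> + a * s"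
    proof -
      have "seq_cost x0 x1 x2 = d / \<bar>c\<bar> + k * a * s" unfolding seq_cost_def using n1 n2 by simp
      also have "k * a * s = a * s - (t * a) * s" unfolding k_def by (simp add: algebra_simps)
      also have "(t * a) * s = d * s^2 / \<bar>c\<bar>" using ta by (simp add: power2_eq_square)
      also have "d / \<bar>c\<bar> + (a * s - d * s^2 / \<bar>c\<bar>) = d * (1 - s^2) / \<bar>c\<bar> + a * s"
        using cpos by (simp add: field_simps)
      also have "1 - s^2 = \<bar>c\<bar> * \<bar>c\<bar>" using sc by (simp add: power2_eq_square)
      also have "d * (\<bar>c\<bar> * \<bar>c\<bar>) / \<bar>c\<bar> = d * \<bar>c\<bar>"
      proof -
        have "d * (\<bar>c\<bar> * \<bar>c\<bar>) = (d * \<bar>c\<bar>) * \<bar>c\<bar>" by (simp only: mult.assoc)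
        thus ?thesis using cpos by (simp only: nonzero_mult_div_cancel_right less_irrefl order.strict_implies_not_eq)
      qed
      finally show ?thesis .
    qed
    define u where "u = (c + \<bar>c\<bar>) *\<^sub>R w1 + 1 *\<^sub>R w2"
    have nu: "norm u = 1"
    proof -
      have "norm u = sqrt ((u \<bullet> w1)^2 + (u \<bullet> J)^2)" by (rule CN)
      also have "u \<bullet> w1 = \<bar>c\<bar>" unfolding u_def using w1w1 w2w1 by (simp add: inner_add_left)
      also have "u \<bullet> J = r" unfolding u_def using w1J w2J by (simp add: inner_add_left)
      finally show ?thesis using cr by simp
    qed
    have ux0: "- (u \<bullet> x0) = d * \<bar>c\<bar> + a * s"
    proof -
      have "w2 = (w2 \<bullet> w1) *\<^sub>R w1 + (w2 \<bullet> J) *\<^sub>R J" by (rule Bdec)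
      hence "w2 \<bullet> x0 = (-c) * (w1 \<bullet> x0) + r * (J \<bullet> x0)" using w2w1 w2J
        by (metis inner_add_left inner_scaleR_left)
      moreover have "w1 \<bullet> x0 = - d" using d_def by simp
      moreover have "J \<bullet> x0 = q" using q_def by (simp add: inner_commute)
      ultimately have w2x0: "w2 \<bullet> x0 = c * d + r * q" by simp
      have "u \<bullet> x0 = (c + \<bar>c\<bar>) * (w1 \<bullet> x0) + w2 \<bullet> x0" unfolding u_def by (simp add: inner_add_left)
      also have "\<dots> = (c + \<bar>c\<bar>) * (- d) + (c * d + r * q)" using w2x0 d_def by simp
      also have "\<dots> = - (d * \<bar>c\<bar>) + q * r" by (simp add: algebra_simps)
      finally show ?thesis using as by simp
    qed
    have BR: "best_response x0 (lin_clf w1) (lin_clf w2) x1 x2"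
      unfolding best_response_def
    proof (intro conjI allI impI)
      show "lin_clf w1 x1 = 1" "lin_clf w2 x2 = 1" by (fact h1x1, fact h2x2)
      fix y1 y2 assume "lin_clf w1 y1 = 1" "lin_clf w2 y2 = 1"
      hence "- (u \<bullet> x0) \<le> seq_cost x0 y1 y2"
        using cert[OF _ u_def _ _ _ w2] nu cpos by simp
      thus "seq_cost x0 x1 x2 \<le> seq_cost x0 y1 y2" using ux0 cost by simp
    qed
    have "c_seq x0 (lin_clf w1) (lin_clf w2) = d * \<bar>c\<bar> + a * s"
      using cinf_min[OF BR] cost by simp
    thus ?thesis using BR unfolding x1_def x2_def k_def t_def by simp
  qed

  show ?thesis
    unfolding nP distd tanE unfolding Pe c_def[symmetric] s_def[symmetric] a_def[symmetric]
    using part1 part2 by blast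
qed

end
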